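(* (a) There exists an identity-labeled full-graph Subgraph MPNN (i.e. a choice of $T$, $M_t$, $U_t$) such that for every graph $G=(V,E)$ and all $i,j\in V$, $h^{(T)}_{i,j}$ equals the number of $2$-paths from $i$ to $j$. (b) There exists an identity-labeled full-graph Subgraph MPNN such that for every graph $G$ and all $i,j\in V$, $h^{(T)}_{i,j}$ equals the number of $3$-paths from $i$ to $j$.
   Context: Graphs are finite, simple, undirected, $G=(V,E)$; $N(v)$ is the neighbour set of $v$. For $L\ge1$, an $L$-path from $i$ to $j$ is a sequence of nodes $i=v_1,v_2,\dots,v_{L+1}=j$, pairwise distinct, with $(v_s,v_{s+1})\in E$ for all $s$ (so there are none when $i=j$). Identity-labeled full-graph Subgraph MPNN: specified by $T$ and arbitrary functions $M_t$ (values in some $\mathbb R^{d_t}$), $U_t$. For each root $i\in V$ and each $j\in V$: $h^{(0)}_{i,j}=\mathbb 1_{i=j}$ (concatenated with the node attribute $x_j$ if attributes are present), and $h^{(t+1)}_{i,j}=U_t\big(h^{(t)}_{i,j},\sum_{k\in N(j)}M_t(h^{(t)}_{i,j},h^{(t)}_{i,k},e_{j,k})\big)$. *)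

theory Defs
  imports Complex_Main
begin

text \<open>Finite simple undirected graphs with vertices drawn from nat
  (every finite graph is isomorphic to one of these). V is the vertex set,
  Adj the (symmetric, irreflexive) adjacency relation.\<close>
definition simple_graph :: "nat set \<Rightarrow> (nat \<Rightarrow> nat \<Rightarrow> bool) \<Rightarrow> bool" where
  "simple_graph V Adj \<longleftrightarrow> finite V \<and>
     (\<forall>u v. Adj u v \<longrightarrow> u \<in> V \<and> v \<in> V) \<and>
     (\<forall>u v. Adj u v \<longrightarrow> Adj v u) \<and>
     (\<forall>v. \<not> Adj v v)"

definition nbrs :: "nat set \<Rightarrow> (nat \<Rightarrow> nat \<Rightarrow> bool) \<Rightarrow> nat \<Rightarrow> nat set" where
  "nbrs V Adj v = {k \<in> V. Adj v k}"

text \<open>Number of L-paths from i to j: sequences v_1..v_{L+1} (list indices 0..L),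
  pairwise distinct, consecutive vertices adjacent, v_1 = i, v_{L+1} = j.\<close>
definition num_paths :: "nat set \<Rightarrow> (nat \<Rightarrow> nat \<Rightarrow> bool) \<Rightarrow> nat \<Rightarrow> nat \<Rightarrow> nat \<Rightarrow> nat" where
  "num_paths V Adj L i j = card {p. length p = Suc L \<and> distinct p \<and> set p \<subseteq> V \<and>
      p ! 0 = i \<and> p ! L = j \<and> (\<forall>s<L. Adj (p ! s) (p ! Suc s))}"

definition msg_wf :: "(nat \<Rightarrow> nat) \<Rightarrow> (nat \<Rightarrow> real list \<Rightarrow> real list \<Rightarrow> real list) \<Rightarrow> bool" where
  "msg_wf d M \<longleftrightarrow> (\<forall>t x y. length (M t x y) = d t)"

text \<open>Identity-labeled full-graph Subgraph MPNN (no node/edge attributes):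
  h^(0)_{i,j} = 1_{i=j} (a vector in R^1),
  h^(t+1)_{i,j} = U_t (h^(t)_{i,j}, sum_{k in N(j)} M_t(h^(t)_{i,j}, h^(t)_{i,k})),
  the sum being the componentwise vector sum in R^(d t).\<close>
fun mpnn_h :: "(nat \<Rightarrow> nat) \<Rightarrow> (nat \<Rightarrow> real list \<Rightarrow> real list \<Rightarrow> real list)
     \<Rightarrow> (nat \<Rightarrow> real list \<Rightarrow> real list \<Rightarrow> real list)
     \<Rightarrow> nat set \<Rightarrow> (nat \<Rightarrow> nat \<Rightarrow> bool) \<Rightarrow> nat \<Rightarrow> nat \<Rightarrow> nat \<Rightarrow> real list" where
  "mpnn_h d M U V Adj 0 i j = [if i = j then 1 else 0]"
| "mpnn_h d M U V Adj (Suc t) i j =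
     U t (mpnn_h d M U V Adj t i j)
       (map (\<lambda>c. \<Sum>k\<in>nbrs V Adj j. M t (mpnn_h d M U V Adj t i j) (mpnn_h d M U V Adj t i k) ! c)
            [0..<d t])"

end

theory Submission
  imports Defs
begin
definition ind :: "bool \<Rightarrow> real" where "ind P = (if P then 1 else 0)"

lemma card_filter_sum: "finite A \<Longrightarrow> real (card {x\<in>A. P x}) = (\<Sum>x\<in>A. ind (P x))"
  by (simp add: ind_def sum.inter_filter[symmetric])

lemma len3: "length p = 3 \<Longrightarrow> \<exists>a b c. p = [a,b,c]"
  by (simp add: numeral_eq_Suc length_Suc_conv) blast
lemma len4: "length p = 4 \<Longrightarrow> \<exists>a b c e. p = [a,b,c,e]"
  by (simp add: numeral_eq_Suc length_Suc_conv) blast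

lemma np2:
  assumes g: "simple_graph V Adj" and i: "i \<in> V" and j: "j \<in> V"
  shows "real (num_paths V Adj 2 i j) = (\<Sum>k\<in>V. ind (i \<noteq> j \<and> Adj i k \<and> Adj k j))"
proof -
  have fin: "finite V" using g by (simp add: simple_graph_def)
  have "{p. length p = Suc 2 \<and> distinct p \<and> set p \<subseteq> V \<and>
      p ! 0 = i \<and> p ! 2 = j \<and> (\<forall>s<2. Adj (p ! s) (p ! Suc s))}
      = (\<lambda>k. [i,k,j]) ` {k\<in>V. i \<noteq> j \<and> Adj i k \<and> Adj k j}" (is "?S = ?R")
  proof
    show "?S \<subseteq> ?R"
    proof
      fix p assume "p \<in> ?S"
      then obtain a b c where p: "p = [a,b,c]" and h: "distinct p \<and> set p \<subseteq> V \<and>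
      p ! 0 = i \<and> p ! 2 = j \<and> (\<forall>s<2. Adj (p ! s) (p ! Suc s))" using len3 by force
      have "Adj a b" "Adj b c" using h p by (auto simp: numeral_eq_Suc less_Suc_eq)
      then show "p \<in> ?R" using h p by auto
    qed
  next
    show "?R \<subseteq> ?S"
    proof
      fix p assume "p \<in> ?R"
      then obtain k where p: "p = [i,k,j]" and k: "k \<in> V" "i \<noteq> j" "Adj i k" "Adj k j" by auto
      have "i \<noteq> k" "k \<noteq> j" using g k unfolding simple_graph_def by auto
      then show "p \<in> ?S" using p k i j by (auto simp: numeral_eq_Suc less_Suc_eq)
    qed
  qed
  moreover have "inj_on (\<lambda>k. [i,k,j]) A" for A by (auto simp: inj_on_def)
  ultimately have "num_paths V Adj 2 i j = card {k\<in>V. i \<noteq> j \<and> Adj i k \<and> Adj k j}"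
    unfolding num_paths_def by (simp add: card_image)
  then show ?thesis using card_filter_sum[OF fin] by simp
qed

lemma np3:
  assumes g: "simple_graph V Adj" and i: "i \<in> V" and j: "j \<in> V"
  shows "real (num_paths V Adj 3 i j) = (\<Sum>a\<in>V. \<Sum>b\<in>V. ind (i \<noteq> j \<and> a \<noteq> j \<and> b \<noteq> i \<and> Adj i a \<and> Adj a b \<and> Adj b j))"
proof -
  have fin: "finite V" using g by (simp add: simple_graph_def)
  have "{p. length p = Suc 3 \<and> distinct p \<and> set p \<subseteq> V \<and>
      p ! 0 = i \<and> p ! 3 = j \<and> (\<forall>s<3. Adj (p ! s) (p ! Suc s))}
      = (\<lambda>(a,b). [i,a,b,j]) ` {x\<in>V\<times>V. (case x of (a,b) \<Rightarrow> i \<noteq> j \<and> a \<noteq> j \<and> b \<noteq> i \<and> Adj i a \<and> Adj a b \<and> Adj b j)}" (is "?S = ?R")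
  proof
    show "?S \<subseteq> ?R"
    proof
      fix p assume "p \<in> ?S"
      then obtain a b c e where p: "p = [a,b,c,e]" and h: "distinct p \<and> set p \<subseteq> V \<and>
      p ! 0 = i \<and> p ! 3 = j \<and> (\<forall>s<3. Adj (p ! s) (p ! Suc s))" using len4 by force
      have "Adj a b" "Adj b c" "Adj c e" using h p by (auto simp: numeral_eq_Suc less_Suc_eq)
      have "a = i" "e = j" "a \<noteq> e" "b \<noteq> e" "c \<noteq> a" "b \<in> V" "c \<in> V" using h p by auto
      then show "p \<in> ?R" using p \<open>Adj a b\<close> \<open>Adj b c\<close> \<open>Adj c e\<close>
        by (intro image_eqI[where x="(b,c)"]) auto
    qed
  next
    show "?R \<subseteq> ?S"
    proof
      fix p assume "p \<in> ?R"
      then obtain a b where p: "p = [i,a,b,j]" and k: "a \<in> V" "b \<in> V" "i \<noteq> j" "a \<noteq> j" "b \<noteq> i" "Adj i a" "Adj a b" "Adj b j" by auto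
      have "i \<noteq> a" "a \<noteq> b" "b \<noteq> j" using g k unfolding simple_graph_def by auto
      then show "p \<in> ?S" using p k i j by (auto simp: numeral_eq_Suc less_Suc_eq)
    qed
  qed
  moreover have "inj_on (\<lambda>(a,b). [i,a,b,j]) A" for A by (auto simp: inj_on_def)
  ultimately have "num_paths V Adj 3 i j = card {x\<in>V\<times>V. (case x of (a,b) \<Rightarrow> i \<noteq> j \<and> a \<noteq> j \<and> b \<noteq> i \<and> Adj i a \<and> Adj a b \<and> Adj b j)}"
    unfolding num_paths_def by (simp add: card_image)
  then have "real (num_paths V Adj 3 i j) = (\<Sum>x\<in>V\<times>V. ind (case x of (a,b) \<Rightarrow> i \<noteq> j \<and> a \<noteq> j \<and> b \<noteq> i \<and> Adj i a \<and> Adj a b \<and> Adj b j))"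
    using card_filter_sum[of "V \<times> V"] fin by simp
  also have "\<dots> = (\<Sum>x\<in>V\<times>V. (case x of (a,b) \<Rightarrow> ind (i \<noteq> j \<and> a \<noteq> j \<and> b \<noteq> i \<and> Adj i a \<and> Adj a b \<and> Adj b j)))"
    by (rule sum.cong) auto
  finally show ?thesis by (simp add: sum.cartesian_product)
qed
definition A :: "(nat \<Rightarrow> nat \<Rightarrow> bool) \<Rightarrow> nat \<Rightarrow> nat \<Rightarrow> real" where "A Adj x y = ind (Adj x y)"

lemma nsum: "simple_graph V Adj \<Longrightarrow> (\<Sum>k\<in>nbrs V Adj j. f k) = (\<Sum>k\<in>V. A Adj j k * f k)"
  unfolding nbrs_def simple_graph_def A_def ind_def by (auto simp: sum.inter_filter intro!: sum.cong)

lemma Asym: "simple_graph V Adj \<Longrightarrow> A Adj x y = A Adj y x"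
  unfolding simple_graph_def A_def ind_def by metis

lemma Asq: "A Adj x y * A Adj x y = A Adj x y"
  unfolding A_def ind_def by simp

definition da :: "nat \<Rightarrow> nat" where "da t = 1"
definition Ma :: "nat \<Rightarrow> real list \<Rightarrow> real list \<Rightarrow> real list" where
  "Ma t x y = (if t = 0 then [y!0] else [y!1])"
definition Ua :: "nat \<Rightarrow> real list \<Rightarrow> real list \<Rightarrow> real list" where
  "Ua t x s = (if t = 0 then [x!0, s!0] else [if x!0 = 1 then 0 else s!0])"

lemma a1:
  assumes g: "simple_graph V Adj" and i: "i \<in> V"
  shows "mpnn_h da Ma Ua V Adj 1 i j = [ind (i = j), A Adj j i]"
proof -
  have fin: "finite V" using g by (simp add: simple_graph_def)
  have "(\<Sum>k\<in>V. A Adj j k * (if i = k then 1 else 0)) = A Adj j i"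
    using fin i by (simp add: if_distrib[of "\<lambda>x. A Adj j k * x" for k] sum.delta cong: if_cong)
  then show ?thesis using g by (simp add: da_def Ma_def Ua_def nsum ind_def)
qed

lemma a2:
  assumes g: "simple_graph V Adj" and i: "i \<in> V" and j: "j \<in> V"
  shows "mpnn_h da Ma Ua V Adj 2 i j = [real (num_paths V Adj 2 i j)]"
proof -
  have fin: "finite V" using g by (simp add: simple_graph_def)
  have e: "mpnn_h da Ma Ua V Adj 2 i j = Ua 1 (mpnn_h da Ma Ua V Adj 1 i j)
     [\<Sum>k\<in>nbrs V Adj j. Ma 1 (mpnn_h da Ma Ua V Adj 1 i j) (mpnn_h da Ma Ua V Adj 1 i k) ! 0]"
    by (simp add: numeral_2_eq_2 da_def)
  have s: "(\<Sum>k\<in>nbrs V Adj j. Ma 1 (mpnn_h da Ma Ua V Adj 1 i j) (mpnn_h da Ma Ua V Adj 1 i k) ! 0)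
     = (\<Sum>k\<in>V. A Adj j k * A Adj k i)"
    unfolding nsum[OF g]
  proof (rule sum.cong)
    fix k assume "k \<in> V"
    show "A Adj j k * (Ma 1 (mpnn_h da Ma Ua V Adj 1 i j) (mpnn_h da Ma Ua V Adj 1 i k) ! 0) = A Adj j k * A Adj k i"
      unfolding a1[OF g i] by (simp add: Ma_def)
  qed simp
  have "(\<Sum>k\<in>V. A Adj j k * A Adj k i) = (\<Sum>k\<in>V. ind (Adj i k \<and> Adj k j))"
    using g unfolding simple_graph_def by (intro sum.cong) (auto simp: A_def ind_def)
  then show ?thesis using e s np2[OF g i j] g i
    by (auto simp: Ua_def a1 ind_def)
qed
definition D :: "nat set \<Rightarrow> (nat \<Rightarrow> nat \<Rightarrow> bool) \<Rightarrow> nat \<Rightarrow> real" where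
  "D V Adj x = (\<Sum>k\<in>V. A Adj x k)"

lemma alg:
  assumes g: "simple_graph V Adj" and i: "i \<in> V" and j: "j \<in> V" and ij: "i \<noteq> j"
  shows "(\<Sum>a\<in>V. \<Sum>b\<in>V. ind (i \<noteq> j \<and> a \<noteq> j \<and> b \<noteq> i \<and> Adj i a \<and> Adj a b \<and> Adj b j))
     = (\<Sum>k\<in>V. A Adj j k * (\<Sum>b\<in>V. A Adj k b * A Adj b i)) - A Adj j i * (D V Adj i + D V Adj j - 1)"
proof -
  have fin: "finite V" using g by (simp add: simple_graph_def)
  have sy: "A Adj x y = A Adj y x" for x y using Asym[OF g] .
  define f where "f a b = A Adj i a * A Adj a b * A Adj b j" for a b
  have pw: "ind (i \<noteq> j \<and> a \<noteq> j \<and> b \<noteq> i \<and> Adj i a \<and> Adj a b \<and> Adj b j)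
     = f a b - (if a = j then f a b else 0) - (if b = i then f a b else 0)
       + (if a = j then (if b = i then f a b else 0) else 0)" for a b
    using ij by (simp add: f_def A_def ind_def)
  have inner: "(\<Sum>b\<in>V. ind (i \<noteq> j \<and> a \<noteq> j \<and> b \<noteq> i \<and> Adj i a \<and> Adj a b \<and> Adj b j))
     = (\<Sum>b\<in>V. f a b) - (if a = j then (\<Sum>b\<in>V. f a b) else 0) - f a i
       + (if a = j then f a i else 0)" for a
    unfolding pw using fin i by (simp add: sum.distrib sum_subtractf)
  have "(\<Sum>a\<in>V. \<Sum>b\<in>V. ind (i \<noteq> j \<and> a \<noteq> j \<and> b \<noteq> i \<and> Adj i a \<and> Adj a b \<and> Adj b j))
     = (\<Sum>a\<in>V. \<Sum>b\<in>V. f a b) - (\<Sum>b\<in>V. f j b) - (\<Sum>a\<in>V. f a i) + f j i"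
    unfolding inner using fin i j by (simp add: sum.distrib sum_subtractf)
  moreover have "(\<Sum>b\<in>V. f j b) = A Adj j i * D V Adj j"
    unfolding f_def D_def sum_distrib_left
  proof (rule sum.cong)
    fix b show "A Adj i j * A Adj j b * A Adj b j = A Adj j i * A Adj j b"
      by (simp only: sy[of i j] sy[of b j] Asq mult.assoc)
  qed simp
  moreover have "(\<Sum>a\<in>V. f a i) = A Adj j i * D V Adj i"
    unfolding f_def D_def sum_distrib_left
  proof (rule sum.cong)
    fix a show "A Adj i a * A Adj a i * A Adj i j = A Adj j i * A Adj i a"
      by (simp only: sy[of i j] sy[of a i] Asq mult.commute)
  qed simp
  moreover have "f j i = A Adj j i"
    unfolding f_def by (simp only: sy[of i j] Asq)
  moreover have "(\<Sum>a\<in>V. \<Sum>b\<in>V. f a b) = (\<Sum>k\<in>V. A Adj j k * (\<Sum>b\<in>V. A Adj k b * A Adj b i))"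
  proof -
    have "(\<Sum>k\<in>V. A Adj j k * (\<Sum>b\<in>V. A Adj k b * A Adj b i)) = (\<Sum>k\<in>V. \<Sum>b\<in>V. A Adj j k * A Adj k b * A Adj b i)"
      by (simp add: sum_distrib_left mult.assoc)
    also have "\<dots> = (\<Sum>b\<in>V. \<Sum>k\<in>V. A Adj j k * A Adj k b * A Adj b i)"
      by (rule sum.swap)
    also have "\<dots> = (\<Sum>a\<in>V. \<Sum>b\<in>V. f a b)"
      unfolding f_def
    proof (intro sum.cong refl)
      fix a b show "A Adj j b * A Adj b a * A Adj a i = A Adj i a * A Adj a b * A Adj b j"
        by (simp only: sy[of j b] sy[of b a] sy[of a i] mult.commute mult.left_commute)
    qed
    finally show ?thesis by simp
  qed
  ultimately show ?thesis by (simp add: algebra_simps)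
qed
lemma step:
  assumes g: "simple_graph V Adj"
  shows "mpnn_h d M U V Adj (Suc t) i j = U t (mpnn_h d M U V Adj t i j)
     (map (\<lambda>c. \<Sum>k\<in>V. A Adj j k * (M t (mpnn_h d M U V Adj t i j) (mpnn_h d M U V Adj t i k) ! c)) [0..<d t])"
  by (simp only: mpnn_h.simps nsum[OF g])

definition db :: "nat \<Rightarrow> nat" where "db t = (if t < 2 then 2 else 1)"
definition Mb :: "nat \<Rightarrow> real list \<Rightarrow> real list \<Rightarrow> real list" where
  "Mb t x y = (if t = 0 then [y!0, 1] else if t = 1 then [y!1, y!2] else [y!2])"
definition Ub :: "nat \<Rightarrow> real list \<Rightarrow> real list \<Rightarrow> real list" where
  "Ub t x s = (if t = 0 then [x!0, s!0, x!0 * s!1, s!1]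
     else if t = 1 then [x!0, x!1, s!0, s!1, x!3]
     else [if x!0 = 1 then 0 else s!0 - x!1 * (x!3 + x!4 - 1)])"

lemma dbs: "db 0 = 2" "db (Suc 0) = 2" "db (Suc (Suc 0)) = Suc 0"
  by (simp_all add: db_def)
lemma inds: "ind True = 1" "ind False = 0" by (simp_all add: ind_def)


lemma b0: "mpnn_h db Mb Ub V Adj 0 i k = [ind (i = k)]"
  by (simp add: ind_def)

lemma b1:
  assumes g: "simple_graph V Adj" and i: "i \<in> V" and j: "j \<in> V"
  shows "mpnn_h db Mb Ub V Adj (Suc 0) i j = [ind (i = j), A Adj j i, ind (i = j) * D V Adj j, D V Adj j]"
proof -
  have fin: "finite V" using g by (simp add: simple_graph_def)
  have "(\<Sum>k\<in>V. A Adj j k * ind (i = k)) = A Adj j i"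
    using fin i by (simp add: ind_def if_distrib[of "\<lambda>x. A Adj j k * x" for k] sum.delta cong: if_cong)
  then show ?thesis
    apply (subst step[OF g])
    apply (simp del: mpnn_h.simps add: b0 j dbs Mb_def Ub_def numeral_2_eq_2 D_def)
    done
qed

lemma b2:
  assumes g: "simple_graph V Adj" and i: "i \<in> V" and j: "j \<in> V"
  shows "mpnn_h db Mb Ub V Adj (Suc (Suc 0)) i j = [ind (i = j), A Adj j i, (\<Sum>k\<in>V. A Adj j k * A Adj k i), A Adj j i * D V Adj i, D V Adj j]"
proof -
  have fin: "finite V" using g by (simp add: simple_graph_def)
  have "(\<Sum>k\<in>V. A Adj j k * (ind (i = k) * D V Adj k)) = (\<Sum>k\<in>V. if k = i then A Adj j k * D V Adj k else 0)"
    by (rule sum.cong) (auto simp: ind_def)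
  also have "\<dots> = A Adj j i * D V Adj i" using fin i by simp
  finally have "(\<Sum>k\<in>V. A Adj j k * (ind (i = k) * D V Adj k)) = A Adj j i * D V Adj i" .
  then show ?thesis
    apply (subst step[OF g])
    apply (simp del: mpnn_h.simps add: b1[OF g i] j cong: sum.cong)
    apply (simp add: dbs Mb_def Ub_def numeral_2_eq_2)
    done
qed

lemma b3:
  assumes g: "simple_graph V Adj" and i: "i \<in> V" and j: "j \<in> V"
  shows "mpnn_h db Mb Ub V Adj 3 i j = [real (num_paths V Adj 3 i j)]"
proof -
  have "mpnn_h db Mb Ub V Adj 3 i j = mpnn_h db Mb Ub V Adj (Suc (Suc (Suc 0))) i j"
    by (simp add: numeral_3_eq_3)
  also have "\<dots> = [if i = j then 0 else (\<Sum>k\<in>V. A Adj j k * (\<Sum>b\<in>V. A Adj k b * A Adj b i)) - A Adj j i * (A Adj j i * D V Adj i + D V Adj j - 1)]"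
    apply (subst step[OF g])
    apply (simp del: mpnn_h.simps add: b2[OF g i] j cong: sum.cong)
    apply (simp add: Mb_def Ub_def ind_def dbs)
    done
  also have "\<dots> = [real (num_paths V Adj 3 i j)]"
  proof (cases "i = j")
    case True
    have "real (num_paths V Adj 3 i j) = 0" unfolding np3[OF g i j] using True by (simp add: ind_def)
    then show ?thesis using True by simp
  next
    case False
    have e1: "A Adj j i * (A Adj j i * D V Adj i + D V Adj j - 1) = A Adj j i * (D V Adj i + D V Adj j - 1)"
      by (simp add: A_def ind_def)
    have e2: "real (num_paths V Adj 3 i j) = (\<Sum>k\<in>V. A Adj j k * (\<Sum>b\<in>V. A Adj k b * A Adj b i)) - A Adj j i * (D V Adj i + D V Adj j - 1)"
      unfolding np3[OF g i j] alg[OF g i j False] ..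
    show ?thesis using False by (simp only: e1 e2 if_False)
  qed
  finally show ?thesis .
qed

theorem lemma2:
  shows "(\<exists>T d M U. msg_wf d M \<and>
           (\<forall>V Adj. simple_graph V Adj \<longrightarrow>
              (\<forall>i\<in>V. \<forall>j\<in>V. mpnn_h d M U V Adj T i j = [real (num_paths V Adj 2 i j)])))
       \<and> (\<exists>T d M U. msg_wf d M \<and>
           (\<forall>V Adj. simple_graph V Adj \<longrightarrow>
              (\<forall>i\<in>V. \<forall>j\<in>V. mpnn_h d M U V Adj T i j = [real (num_paths V Adj 3 i j)])))"
proof
  show "\<exists>T d M U. msg_wf d M \<and>
           (\<forall>V Adj. simple_graph V Adj \<longrightarrow>
              (\<forall>i\<in>V. \<forall>j\<in>V. mpnn_h d M U V Adj T i j = [real (num_paths V Adj 2 i j)]))"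
    by (rule exI[of _ 2], rule exI[of _ da], rule exI[of _ Ma], rule exI[of _ Ua])
       (auto simp: msg_wf_def da_def Ma_def a2)
  show "\<exists>T d M U. msg_wf d M \<and>
           (\<forall>V Adj. simple_graph V Adj \<longrightarrow>
              (\<forall>i\<in>V. \<forall>j\<in>V. mpnn_h d M U V Adj T i j = [real (num_paths V Adj 3 i j)]))"
    by (rule exI[of _ 3], rule exI[of _ db], rule exI[of _ Mb], rule exI[of _ Ub])
       (auto simp: msg_wf_def db_def Mb_def b3)
qed
end
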